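(* Let $\mathfrak l$ be a real finite-dimensional nilpotent Lie algebra with $\dim\mathfrak l'=2$ and $\mathfrak l'\subset\mathfrak z(\mathfrak l)$, let $X_1,X_2,X_3\in\mathfrak l$ and let $Y,Z$ be a basis of $\mathfrak l'$ such that $[X_1,X_2]=Y$, $[X_1,X_3]=Z$, $[X_2,X_3]=0$. Let $\mathfrak a$ be a semisimple orthogonal $\mathfrak l$-module and let $(\alpha,\gamma)\in\mathcal Z^2_Q(\mathfrak l,\mathfrak a)$ with $\alpha(\mathfrak l,\mathfrak l)\subset\mathfrak a^{\mathfrak l}$. Then: (i) $\alpha(Y,Z)=0$; (ii) $\alpha(Y,L)=0$ for all $L\in\mathfrak l$ with $[L,X_1]=[L,X_2]=0$; (iii) $\alpha(Z,L)=0$ for all $L\in\mathfrak l$ with $[L,X_1]=[L,X_3]=0$; (iv) $\langle\alpha(U_1,L_1),\alpha(U_2,L_2)\rangle=\langle\alpha(U_1,L_2),\alpha(U_2,L_1)\rangle$ for all $U_1,U_2\in\mathfrak l'$ and $L_1,L_2\in\mathfrak l$.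
   Context: $\mathfrak l'=[\mathfrak l,\mathfrak l]$, $\mathfrak z(\mathfrak l)$ the centre. An orthogonal $\mathfrak l$-module is a finite-dimensional real vector space $\mathfrak a$ with a nondegenerate symmetric bilinear form $\langle\cdot,\cdot\rangle$ and a representation of $\mathfrak l$ by skew-adjoint maps; $\mathfrak a^{\mathfrak l}$ denotes the invariants. $C^p(\mathfrak l,\mathfrak a)$ are alternating $p$-linear maps with the Chevalley–Eilenberg differential $d$, $C^p(\mathfrak l)=C^p(\mathfrak l,\mathbb R)$; $\langle\alpha\wedge\alpha\rangle\in C^4(\mathfrak l)$ is the wedge product of $\alpha$ with itself followed by contraction with $\langle\cdot,\cdot\rangle$. $\mathcal Z^2_Q(\mathfrak l,\mathfrak a)=\{(\alpha,\gamma)\in C^2(\mathfrak l,\mathfrak a)\oplus C^3(\mathfrak l): d\alpha=0,\ d\gamma=\frac12\langle\alpha\wedge\alpha\rangle\}$. *)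

theory Defs
  imports "HOL-Analysis.Analysis"
begin

text \<open>Real finite-dimensional Lie algebras are modelled on a type 'l of class
euclidean_space (used only as a finite-dimensional real vector space; its inner
product plays no role), with a bracket br.\<close>

definition lie_algebra :: "('l::real_vector \<Rightarrow> 'l \<Rightarrow> 'l) \<Rightarrow> bool" where
  "lie_algebra br \<longleftrightarrow> bilinear br \<and> (\<forall>x. br x x = 0) \<and>
     (\<forall>x y z. br x (br y z) + br y (br z x) + br z (br x y) = 0)"

definition derived :: "('l::real_vector \<Rightarrow> 'l \<Rightarrow> 'l) \<Rightarrow> 'l set" where
  "derived br = span {br x y | x y. True}"

definition centre :: "('l::real_vector \<Rightarrow> 'l \<Rightarrow> 'l) \<Rightarrow> 'l set" where
  "centre br = {z. \<forall>x. br z x = 0}"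

fun lcs :: "('l::real_vector \<Rightarrow> 'l \<Rightarrow> 'l) \<Rightarrow> nat \<Rightarrow> 'l set" where
  "lcs br 0 = UNIV"
| "lcs br (Suc n) = span {br x y | x y. y \<in> lcs br n}"

definition nilpotent_lie :: "('l::real_vector \<Rightarrow> 'l \<Rightarrow> 'l) \<Rightarrow> bool" where
  "nilpotent_lie br \<longleftrightarrow> lie_algebra br \<and> (\<exists>n. lcs br n = {0})"

definition orthogonal_module ::
  "('l::real_vector \<Rightarrow> 'l \<Rightarrow> 'l) \<Rightarrow> ('l \<Rightarrow> 'a::real_vector \<Rightarrow> 'a) \<Rightarrow> ('a \<Rightarrow> 'a \<Rightarrow> real) \<Rightarrow> bool" where
  "orthogonal_module br rho B \<longleftrightarrow>
     bilinear rho \<and>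
     (\<forall>x y u. rho (br x y) u = rho x (rho y u) - rho y (rho x u)) \<and>
     bilinear B \<and> (\<forall>u v. B u v = B v u) \<and> (\<forall>u. (\<forall>v. B u v = 0) \<longrightarrow> u = 0) \<and>
     (\<forall>x u v. B (rho x u) v + B u (rho x v) = 0)"

definition invariant_subspace :: "('l \<Rightarrow> 'a::real_vector \<Rightarrow> 'a) \<Rightarrow> 'a set \<Rightarrow> bool" where
  "invariant_subspace rho U \<longleftrightarrow> subspace U \<and> (\<forall>x u. u \<in> U \<longrightarrow> rho x u \<in> U)"

definition semisimple_module :: "('l \<Rightarrow> 'a::real_vector \<Rightarrow> 'a) \<Rightarrow> bool" where
  "semisimple_module rho \<longleftrightarrow>
     (\<forall>U. invariant_subspace rho U \<longrightarrow>
        (\<exists>W. invariant_subspace rho W \<and> U \<inter> W = {0} \<and> {u + w | u w. u \<in> U \<and> w \<in> W} = UNIV))"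

definition invariants :: "('l \<Rightarrow> 'a::real_vector \<Rightarrow> 'a) \<Rightarrow> 'a set" where
  "invariants rho = {u. \<forall>x. rho x u = 0}"

definition trilinear :: "('a::real_vector \<Rightarrow> 'a \<Rightarrow> 'a \<Rightarrow> 'b::real_vector) \<Rightarrow> bool" where
  "trilinear f \<longleftrightarrow> (\<forall>y z. linear (\<lambda>x. f x y z)) \<and> (\<forall>x z. linear (\<lambda>y. f x y z)) \<and>
                  (\<forall>x y. linear (\<lambda>z. f x y z))"

definition cochain2 :: "('l::real_vector \<Rightarrow> 'l \<Rightarrow> 'a::real_vector) \<Rightarrow> bool" where
  "cochain2 \<alpha> \<longleftrightarrow> bilinear \<alpha> \<and> (\<forall>x. \<alpha> x x = 0)"

definition cochain3 :: "('l::real_vector \<Rightarrow> 'l \<Rightarrow> 'l \<Rightarrow> real) \<Rightarrow> bool" where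
  "cochain3 \<gamma> \<longleftrightarrow> trilinear \<gamma> \<and> (\<forall>x y. \<gamma> x x y = 0) \<and> (\<forall>x y. \<gamma> x y y = 0)"

definition d2 :: "('l \<Rightarrow> 'l \<Rightarrow> 'l) \<Rightarrow> ('l \<Rightarrow> 'a \<Rightarrow> 'a) \<Rightarrow> ('l \<Rightarrow> 'l \<Rightarrow> 'a::real_vector)
                   \<Rightarrow> 'l \<Rightarrow> 'l \<Rightarrow> 'l \<Rightarrow> 'a" where
  "d2 br rho \<alpha> x y z =
     rho x (\<alpha> y z) - rho y (\<alpha> x z) + rho z (\<alpha> x y)
     - \<alpha> (br x y) z + \<alpha> (br x z) y - \<alpha> (br y z) x"

definition d3 :: "('l \<Rightarrow> 'l \<Rightarrow> 'l) \<Rightarrow> ('l \<Rightarrow> 'l \<Rightarrow> 'l \<Rightarrow> real) \<Rightarrow> 'l \<Rightarrow> 'l \<Rightarrow> 'l \<Rightarrow> 'l \<Rightarrow> real" where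
  "d3 br \<gamma> x1 x2 x3 x4 =
     - \<gamma> (br x1 x2) x3 x4 + \<gamma> (br x1 x3) x2 x4 - \<gamma> (br x1 x4) x2 x3
     - \<gamma> (br x2 x3) x1 x4 + \<gamma> (br x2 x4) x1 x3 - \<gamma> (br x3 x4) x1 x2"

text \<open>\<langle>\<alpha>\<and>\<alpha>\<rangle>: wedge (sum over (2,2)-shuffles with signs) followed by contraction with B.\<close>
definition wedge_contr :: "('a \<Rightarrow> 'a \<Rightarrow> real) \<Rightarrow> ('l \<Rightarrow> 'l \<Rightarrow> 'a) \<Rightarrow> 'l \<Rightarrow> 'l \<Rightarrow> 'l \<Rightarrow> 'l \<Rightarrow> real" where
  "wedge_contr B \<alpha> x1 x2 x3 x4 =
       B (\<alpha> x1 x2) (\<alpha> x3 x4) - B (\<alpha> x1 x3) (\<alpha> x2 x4) + B (\<alpha> x1 x4) (\<alpha> x2 x3)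
     + B (\<alpha> x2 x3) (\<alpha> x1 x4) - B (\<alpha> x2 x4) (\<alpha> x1 x3) + B (\<alpha> x3 x4) (\<alpha> x1 x2)"

definition Z2Q ::
  "('l::real_vector \<Rightarrow> 'l \<Rightarrow> 'l) \<Rightarrow> ('l \<Rightarrow> 'a::real_vector \<Rightarrow> 'a) \<Rightarrow> ('a \<Rightarrow> 'a \<Rightarrow> real)
     \<Rightarrow> ('l \<Rightarrow> 'l \<Rightarrow> 'a) \<Rightarrow> ('l \<Rightarrow> 'l \<Rightarrow> 'l \<Rightarrow> real) \<Rightarrow> bool" where
  "Z2Q br rho B \<alpha> \<gamma> \<longleftrightarrow> cochain2 \<alpha> \<and> cochain3 \<gamma> \<and>
     (\<forall>x y z. d2 br rho \<alpha> x y z = 0) \<and>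
     (\<forall>x1 x2 x3 x4. d3 br \<gamma> x1 x2 x3 x4 = (1/2) * wedge_contr B \<alpha> x1 x2 x3 x4)"

end

theory Submission
  imports Defs
begin

lemma sub_lin:
  assumes "\<And>c. c \<in> S \<Longrightarrow> linear (\<lambda>x. g x c)"
  shows "subspace {x. \<forall>c\<in>S. g x c = (0::'b::real_vector)}"
  unfolding subspace_def
proof (intro conjI ballI allI; clarsimp)
  show "g 0 c = 0" if "c \<in> S" for c using linear_0[OF assms[OF that]] by simp
  show "g (x + y) c = 0" if "c \<in> S" "\<forall>c\<in>S. g x c = 0" "\<forall>c\<in>S. g y c = 0" for x y c
    using linear_add[OF assms[OF that(1)], of x y] that by simp
  show "g (a *\<^sub>R x) c = 0" if "\<forall>c\<in>S. g x c = 0" "c \<in> S" for a x c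
    using linear_scale[OF assms[OF that(2)], of a x] that by simp
qed

lemma span_ind2:
  assumes "x \<in> span S" "\<And>c. c \<in> T \<Longrightarrow> linear (\<lambda>x. g x c)"
    "\<And>y c. y \<in> S \<Longrightarrow> c \<in> T \<Longrightarrow> g y c = (0::'b::real_vector)"
    "c \<in> T"
  shows "g x c = 0"
proof -
  have "x \<in> {x. \<forall>c\<in>T. g x c = 0}"
    using assms(1)
  proof (induct rule: span_induct)
    case base
    show ?case using sub_lin[of T g, OF assms(2)] by simp
  next
    case (step x) then show ?case using assms(3) by auto
  qed
  then show ?thesis using assms(4) by auto
qed

lemma gamma_zero:
  fixes \<gamma> :: "'l::real_vector \<Rightarrow> 'l \<Rightarrow> 'l \<Rightarrow> real"
  assumes c: "cochain3 \<gamma>" and a: "a \<in> span {Y, Z}" and b: "b \<in> span {Y, Z}"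
    and cc: "c \<in> span {Y, Z}"
  shows "\<gamma> a b c = 0"
proof -
  have tri: "trilinear \<gamma>" and g1: "\<And>x y. \<gamma> x x y = 0" and g2: "\<And>x y. \<gamma> x y y = 0"
    using c unfolding cochain3_def by auto
  have l1: "\<And>y z. linear (\<lambda>x. \<gamma> x y z)" and l2: "\<And>x z. linear (\<lambda>y. \<gamma> x y z)"
    and l3: "\<And>x y. linear (\<lambda>z. \<gamma> x y z)" using tri unfolding trilinear_def by auto
  have g3: "\<gamma> x y x = 0" for x y
  proof -
    have "\<gamma> x (y + x) (y + x) = 0" by (rule g2)
    then have "\<gamma> x y y + \<gamma> x y x + (\<gamma> x x y + \<gamma> x x x) = 0"
      by (simp add: linear_add[OF l2] linear_add[OF l3])
    then show ?thesis using g1 g2 by simp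
  qed
  have s1: "\<gamma> a' b' c' = 0" if "a' \<in> {Y,Z}" "b' \<in> {Y,Z}" "c' \<in> span {Y,Z}" for a' b' c'
  proof -
    have "(\<lambda>z. \<gamma> a' b' z) c' = 0"
      using that(3)
    proof (induct rule: span_induct)
      case base show ?case
        unfolding subspace_def by (auto simp: linear_add[OF l3] linear_scale[OF l3] linear_0[OF l3])
    next
      case (step x) then show ?case using that(1,2) g1 g2 g3 by auto
    qed
    then show ?thesis by simp
  qed
  have s2: "\<gamma> a' b' c' = 0" if "a' \<in> {Y,Z}" "b' \<in> span {Y,Z}" "c' \<in> span {Y,Z}" for a' b' c'
    using span_ind2[of b' "{Y,Z}" "span {Y,Z}" "\<lambda>y c. \<gamma> a' y c" c'] that s1 l2 by blast
  show ?thesis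
    using span_ind2[of a "{Y,Z}" "span {Y,Z} \<times> span {Y,Z}" "\<lambda>x p. \<gamma> x (fst p) (snd p)" "(b,c)"]
      a b cc s2 l1 by auto
qed

theorem lemma2:
  fixes br :: "'l::euclidean_space \<Rightarrow> 'l \<Rightarrow> 'l"
    and rho :: "'l \<Rightarrow> 'a::euclidean_space \<Rightarrow> 'a"
    and B :: "'a \<Rightarrow> 'a \<Rightarrow> real"
    and \<alpha> :: "'l \<Rightarrow> 'l \<Rightarrow> 'a"
    and \<gamma> :: "'l \<Rightarrow> 'l \<Rightarrow> 'l \<Rightarrow> real"
    and X1 X2 X3 Y Z :: 'l
  assumes nil: "nilpotent_lie br"
    and dim2: "dim (derived br) = 2"
    and central: "derived br \<subseteq> centre br"
    and basis: "Y \<in> derived br" "Z \<in> derived br" "independent {Y, Z}" "Y \<noteq> Z"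
               "span {Y, Z} = derived br"
    and brk: "br X1 X2 = Y" "br X1 X3 = Z" "br X2 X3 = 0"
    and omod: "orthogonal_module br rho B"
    and ss: "semisimple_module rho"
    and cocyc: "Z2Q br rho B \<alpha> \<gamma>"
    and inv: "\<forall>x y. \<alpha> x y \<in> invariants rho"
  shows "\<alpha> Y Z = 0
    \<and> (\<forall>L. br L X1 = 0 \<and> br L X2 = 0 \<longrightarrow> \<alpha> Y L = 0)
    \<and> (\<forall>L. br L X1 = 0 \<and> br L X3 = 0 \<longrightarrow> \<alpha> Z L = 0)
    \<and> (\<forall>U1 U2 L1 L2. U1 \<in> derived br \<and> U2 \<in> derived br \<longrightarrow>
           B (\<alpha> U1 L1) (\<alpha> U2 L2) = B (\<alpha> U1 L2) (\<alpha> U2 L1))"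
proof -
  have lie: "lie_algebra br" using nil unfolding nilpotent_lie_def by auto
  have brbil: "bilinear br" and brxx: "\<And>x. br x x = 0" using lie unfolding lie_algebra_def by auto
  have anti: "br x y = - br y x" for x y
  proof -
    have "br (x + y) (x + y) = 0" by (rule brxx)
    then have "br x x + br x y + (br y x + br y y) = 0"
      using brbil unfolding bilinear_def by (metis (no_types, lifting) linear_add)
    then show ?thesis using brxx by (simp add: eq_neg_iff_add_eq_0)
  qed
  have cen: "\<And>u x. u \<in> derived br \<Longrightarrow> br u x = 0" using central unfolding centre_def by auto
  have cen2: "\<And>u x. u \<in> derived br \<Longrightarrow> br x u = 0" using cen anti by (metis neg_equal_0_iff_equal)
  have c2: "cochain2 \<alpha>" and c3: "cochain3 \<gamma>" and d2z: "\<And>x y z. d2 br rho \<alpha> x y z = 0"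
    and d3e: "\<And>x1 x2 x3 x4. d3 br \<gamma> x1 x2 x3 x4 = (1/2) * wedge_contr B \<alpha> x1 x2 x3 x4"
    using cocyc unfolding Z2Q_def by auto
  have abil: "bilinear \<alpha>" and axx: "\<And>x. \<alpha> x x = 0" using c2 unfolding cochain2_def by auto
  have al1: "\<And>y. linear (\<lambda>x. \<alpha> x y)" and al2: "\<And>x. linear (\<lambda>y. \<alpha> x y)"
    using abil unfolding bilinear_def by auto
  have a0: "\<alpha> 0 y = 0" for y using linear_0[OF al1[of y]] by simp
  have aanti: "\<alpha> x y = - \<alpha> y x" for x y
  proof -
    have "\<alpha> (x + y) (x + y) = 0" by (rule axx)
    then have "\<alpha> x x + \<alpha> x y + (\<alpha> y x + \<alpha> y y) = 0"
      by (simp add: linear_add[OF al1] linear_add[OF al2] ac_simps)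
    then show ?thesis using axx by (simp add: eq_neg_iff_add_eq_0)
  qed
  have rinv: "rho x (\<alpha> y z) = 0" for x y z using inv unfolding invariants_def by auto
  have coc: "- \<alpha> (br x y) z + \<alpha> (br x z) y - \<alpha> (br y z) x = 0" for x y z
    using d2z[of x y z] unfolding d2_def by (simp add: rinv)
  have i: "\<alpha> Y Z = 0"
    using coc[of X1 X2 Z] brk cen2[OF basis(2)] by (simp add: a0)
  have ii: "\<forall>L. br L X1 = 0 \<and> br L X2 = 0 \<longrightarrow> \<alpha> Y L = 0"
  proof (intro allI impI)
    fix L assume "br L X1 = 0 \<and> br L X2 = 0"
    then have "br X1 L = 0" "br X2 L = 0" using anti by (metis neg_equal_0_iff_equal)+
    then show "\<alpha> Y L = 0" using coc[of X1 X2 L] brk by (simp add: a0)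
  qed
  have iii: "\<forall>L. br L X1 = 0 \<and> br L X3 = 0 \<longrightarrow> \<alpha> Z L = 0"
  proof (intro allI impI)
    fix L assume "br L X1 = 0 \<and> br L X3 = 0"
    then have "br X1 L = 0" "br X3 L = 0" using anti by (metis neg_equal_0_iff_equal)+
    then show "\<alpha> Z L = 0" using coc[of X1 X3 L] brk by (simp add: a0)
  qed
  have sZ: "\<alpha> Z Y = 0" using i aanti by (metis neg_equal_0_iff_equal)
  have aD: "\<alpha> u v = 0" if "u \<in> span {Y,Z}" "v \<in> span {Y,Z}" for u v
  proof -
    have s1: "\<alpha> u' v' = 0" if "u' \<in> {Y,Z}" "v' \<in> {Y,Z}" for u' v'
      using that axx i sZ by auto
    show ?thesis
      using span_ind2[of u "{Y,Z}" "span {Y,Z}" "\<alpha>" v] that al1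
        span_ind2[of _ "{Y,Z}" "{Y,Z}" "\<lambda>x c. \<alpha> c x"] al2 s1
      by blast
  qed
  have Bbil: "bilinear B" and Bsym: "\<And>u v. B u v = B v u"
    using omod unfolding orthogonal_module_def by auto
  have B0: "B 0 y = 0" for y using Bbil unfolding bilinear_def by (metis linear_0)
  have g0: "\<gamma> 0 y z = 0" for y z
    using c3 unfolding cochain3_def trilinear_def by (metis linear_0)
  have iv: "\<forall>U1 U2 L1 L2. U1 \<in> derived br \<and> U2 \<in> derived br \<longrightarrow>
           B (\<alpha> U1 L1) (\<alpha> U2 L2) = B (\<alpha> U1 L2) (\<alpha> U2 L1)"
  proof (intro allI impI)
    fix U1 U2 L1 L2 assume U: "U1 \<in> derived br \<and> U2 \<in> derived br"
    have u12: "\<alpha> U1 U2 = 0" using aD U basis(5) by auto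
    have bL: "br L1 L2 \<in> span {Y,Z}" using basis(5) unfolding derived_def
      by (auto intro: span_base)
    have gz: "\<gamma> (br L1 L2) U1 U2 = 0"
      using gamma_zero[OF c3 bL] U basis(5) by auto
    have "d3 br \<gamma> U1 U2 L1 L2 = 0"
      unfolding d3_def using U cen gz by (simp add: g0)
    then have "wedge_contr B \<alpha> U1 U2 L1 L2 = 0" using d3e by simp
    then have "- B (\<alpha> U1 L1) (\<alpha> U2 L2) + B (\<alpha> U1 L2) (\<alpha> U2 L1)
       - B (\<alpha> U2 L2) (\<alpha> U1 L1) + B (\<alpha> U2 L1) (\<alpha> U1 L2) = 0"
      unfolding wedge_contr_def using u12 B0 Bsym by (simp add: algebra_simps)
    then show "B (\<alpha> U1 L1) (\<alpha> U2 L2) = B (\<alpha> U1 L2) (\<alpha> U2 L1)"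
      using Bsym[of "\<alpha> U2 L2" "\<alpha> U1 L1"] Bsym[of "\<alpha> U2 L1" "\<alpha> U1 L2"] by simp
  qed
  show ?thesis using i ii iii iv by blast
qed

end
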